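(* Let $\langle \mathcal{M},\mathcal{R}\rangle$ be a finite reaction network and let $X\subseteq\mathcal{M}$ be a nonempty reactive closed set such that the reactive closed sets contained in $X$ are totally ordered by inclusion, i.e., for any two distinct reactive closed sets $X_1\neq X_2$ with $X_1,X_2\subseteq X$, either $X_1\subset X_2$ or $X_2\subset X_1$. Then there exists a reaction $r\in\mathcal{R}_X$ such that $X=G_{CL}(\mathrm{supp}(r))$.
   Context: A reaction network is a pair $\langle \mathcal{M},\mathcal{R}\rangle$ where $\mathcal{M}$ is a finite set of species and $\mathcal{R}$ is a finite set of reactions, each of the form $\sum_j a_{ij}s_j\to\sum_j b_{ij}s_j$ with $a_{ij},b_{ij}\ge 0$. For a reaction $r$, $\mathrm{supp}(r)=\{s_j: a_{ij}>0\}$ and $\mathrm{prod}(r)=\{s_j: b_{ij}>0\}$; for a set of reactions these denote unions over its reactions. Reactions with empty support (inflows $\emptyset\to s$) are allowed. For $X\subseteq\mathcal{M}$, $\mathcal{R}_X=\{r\in\mathcal{R}:\mathrm{supp}(r)\subseteq X\}$. $X$ is closed if $\mathrm{prod}(\mathcal{R}_X)\subseteq X$. $G_{CL}(Y)$ denotes the smallest closed set containing $Y$. $X$ is reactive if for every $x\in X$ there is $r\in\mathcal{R}_X$ with $x\in\mathrm{supp}(r)\cup\mathrm{prod}(r)$. *)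

theory Defs
  imports Complex_Main
begin

(* A reaction  sum_j a_j s_j -> sum_j b_j s_j  is represented by the pair (a, b) of
   its stoichiometric coefficient functions (species => nonnegative real). *)
type_synonym 'a reaction = "('a \<Rightarrow> real) \<times> ('a \<Rightarrow> real)"

definition supp :: "'a reaction \<Rightarrow> 'a set" where
  "supp r = {s. 0 < fst r s}"

definition prd :: "'a reaction \<Rightarrow> 'a set" where
  "prd r = {s. 0 < snd r s}"

definition prds :: "'a reaction set \<Rightarrow> 'a set" where
  "prds Rs = (\<Union>r\<in>Rs. prd r)"

definition reaction_network :: "'a set \<Rightarrow> 'a reaction set \<Rightarrow> bool" where
  "reaction_network M R \<longleftrightarrow> finite M \<and> finite R \<and>
     (\<forall>r\<in>R. (\<forall>s. 0 \<le> fst r s \<and> 0 \<le> snd r s) \<and> supp r \<subseteq> M \<and> prd r \<subseteq> M)"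

definition reacs :: "'a reaction set \<Rightarrow> 'a set \<Rightarrow> 'a reaction set" where
  "reacs R X = {r \<in> R. supp r \<subseteq> X}"

definition closed :: "'a set \<Rightarrow> 'a reaction set \<Rightarrow> 'a set \<Rightarrow> bool" where
  "closed M R X \<longleftrightarrow> X \<subseteq> M \<and> prds (reacs R X) \<subseteq> X"

definition reactive :: "'a set \<Rightarrow> 'a reaction set \<Rightarrow> 'a set \<Rightarrow> bool" where
  "reactive M R X \<longleftrightarrow> X \<subseteq> M \<and> (\<forall>x\<in>X. \<exists>r\<in>reacs R X. x \<in> supp r \<union> prd r)"

definition G_CL :: "'a set \<Rightarrow> 'a reaction set \<Rightarrow> 'a set \<Rightarrow> 'a set" where
  "G_CL M R Y = \<Inter>{X. closed M R X \<and> Y \<subseteq> X}"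

end

theory Submission
  imports Defs
begin

lemma GCL_closed:
  assumes net: "reaction_network M R" and Y: "Y \<subseteq> M"
  shows "closed M R (G_CL M R Y)"
proof -
  have Mc: "closed M R M" using net
    unfolding closed_def reaction_network_def prds_def reacs_def by blast
  have sub: "G_CL M R Y \<subseteq> M" unfolding G_CL_def using Mc Y by blast
  have "prds (reacs R (G_CL M R Y)) \<subseteq> Z" if "closed M R Z" "Y \<subseteq> Z" for Z
  proof -
    have "G_CL M R Y \<subseteq> Z" unfolding G_CL_def using that by blast
    hence "reacs R (G_CL M R Y) \<subseteq> reacs R Z" unfolding reacs_def by blast
    hence "prds (reacs R (G_CL M R Y)) \<subseteq> prds (reacs R Z)" unfolding prds_def by blast
    thus ?thesis using that(1) unfolding closed_def by blast
  qed
  hence "prds (reacs R (G_CL M R Y)) \<subseteq> G_CL M R Y" unfolding G_CL_def by blast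
  with sub show ?thesis unfolding closed_def by blast
qed

lemma GCL_least:
  assumes "closed M R Z" "Y \<subseteq> Z" shows "G_CL M R Y \<subseteq> Z"
  using assms unfolding G_CL_def by blast

lemma GCL_sup: "Y \<subseteq> G_CL M R Y" unfolding G_CL_def by blast

lemma GCL_reactive:
  assumes net: "reaction_network M R" and r: "r \<in> R"
  shows "reactive M R (G_CL M R (supp r))"
proof -
  let ?G = "G_CL M R (supp r)"
  have Y: "supp r \<subseteq> M" using net r unfolding reaction_network_def by blast
  have cG: "closed M R ?G" using GCL_closed[OF net Y] .
  let ?W = "supp r \<union> prds (reacs R ?G)"
  have WG: "?W \<subseteq> ?G" using cG GCL_sup[of "supp r" M R] unfolding closed_def by blast
  have WM: "?W \<subseteq> M" using WG cG unfolding closed_def by blast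
  have "reacs R ?W \<subseteq> reacs R ?G" using WG unfolding reacs_def by blast
  hence "prds (reacs R ?W) \<subseteq> ?W" unfolding prds_def by blast
  hence "closed M R ?W" using WM unfolding closed_def by blast
  hence "?G \<subseteq> ?W" using GCL_least by blast
  moreover have rG: "r \<in> reacs R ?G" using r GCL_sup[of "supp r" M R] unfolding reacs_def by blast
  moreover have "\<forall>x\<in>?W. \<exists>r'\<in>reacs R ?G. x \<in> supp r' \<union> prd r'"
    using rG unfolding prds_def by blast
  ultimately show ?thesis using cG unfolding reactive_def closed_def by blast
qed

theorem lemma2:
  fixes M :: "'a set" and R :: "'a reaction set" and X :: "'a set"
  assumes "reaction_network M R"
    and "X \<subseteq> M" and "X \<noteq> {}"
    and "reactive M R X" and "closed M R X"
    and "\<forall>X1 X2. X1 \<subseteq> X \<and> X2 \<subseteq> X \<and> reactive M R X1 \<and> closed M R X1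
            \<and> reactive M R X2 \<and> closed M R X2 \<and> X1 \<noteq> X2
            \<longrightarrow> X1 \<subset> X2 \<or> X2 \<subset> X1"
  shows "\<exists>r\<in>reacs R X. X = G_CL M R (supp r)"
proof -
  define G where "G r = G_CL M R (supp r)" for r
  have net: "reaction_network M R" using assms(1) .
  have finR: "finite (reacs R X)" using net unfolding reaction_network_def reacs_def by auto
  have finM: "finite M" using net unfolding reaction_network_def by auto
  have ne: "reacs R X \<noteq> {}" using assms(3,4) unfolding reactive_def by blast
  have rR: "r \<in> R" if "r \<in> reacs R X" for r using that unfolding reacs_def by blast
  have GX: "G r \<subseteq> X" if "r \<in> reacs R X" for r
    using that assms(5) GCL_least unfolding G_def reacs_def by blast
  have Gc: "closed M R (G r)" if "r \<in> reacs R X" for r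
    using GCL_closed[OF net] rR[OF that] net unfolding G_def reaction_network_def by blast
  have Gr: "reactive M R (G r)" if "r \<in> reacs R X" for r
    using GCL_reactive[OF net rR[OF that]] unfolding G_def .
  have finG: "finite (G r)" if "r \<in> reacs R X" for r
    using Gc[OF that] finM unfolding closed_def by (meson finite_subset)
  obtain r where r: "r \<in> reacs R X" and rmax: "\<forall>r'\<in>reacs R X. card (G r') \<le> card (G r)"
  proof -
    let ?S = "(\<lambda>r. card (G r)) ` reacs R X"
    have "Max ?S \<in> ?S" using finR ne by simp
    then obtain r where "r \<in> reacs R X" "card (G r) = Max ?S" by auto
    moreover have "\<forall>r'\<in>reacs R X. card (G r') \<le> Max ?S" using finR by simp
    ultimately show ?thesis using that by metis
  qed
  have sub: "G r' \<subseteq> G r" if r': "r' \<in> reacs R X" for r'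
  proof (rule ccontr)
    assume nsub: "\<not> G r' \<subseteq> G r"
    hence "G r' \<noteq> G r" by blast
    hence "G r' \<subset> G r \<or> G r \<subset> G r'"
      using assms(6)[rule_format, of "G r'" "G r", OF conjI[OF GX[OF r'] conjI[OF GX[OF r] conjI[OF Gr[OF r'] conjI[OF Gc[OF r'] conjI[OF Gr[OF r] conjI[OF Gc[OF r]]]]]]]] by blast
    hence "G r \<subset> G r'" using nsub by blast
    hence "card (G r) < card (G r')" using finG[OF r'] psubset_card_mono by blast
    thus False using rmax r' by force
  qed
  have "X \<subseteq> G r"
  proof
    fix x assume "x \<in> X"
    then obtain r' where r': "r' \<in> reacs R X" and x: "x \<in> supp r' \<union> prd r'"
      using assms(4) unfolding reactive_def by blast
    have s: "supp r' \<subseteq> G r'" unfolding G_def by (rule GCL_sup)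
    hence "r' \<in> reacs R (G r')" using rR[OF r'] unfolding reacs_def by blast
    hence "prd r' \<subseteq> G r'" using Gc[OF r'] unfolding closed_def prds_def by blast
    thus "x \<in> G r" using s x sub[OF r'] by blast
  qed
  hence "X = G r" using GX[OF r] by blast
  thus ?thesis using r unfolding G_def by blast
qed

end
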